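(* Fix $0<\tau<1$ and a positive even integer $k$ (not depending on $n$). For each $n$, let $P_n=\{x_1,\dots,x_n\}\subset\mathbb{R}^2$ be the discrete circle and let $\phi^*_n:P_n\to\mathbb{R}^2$, $y_i=\phi^*_n(x_i)$, be a maximizer of the simplified t-SNE objective $$C(y_1,\dots,y_n)=\sum_{(i,j)\in\mathcal N_k}\log q_{ij}.$$ Suppose that for each $n$ the map $\phi^*_n$ is bilipschitz with scaling factor $S_n=n^\tau$ and some distortion factor $L\ge 1$, and let $L_n$ denote the smallest such distortion factor. Then $L_n\to\infty$ as $n\to\infty$.
   Context: The discrete circle is $P_n=\{x_i=(\cos(2\pi i/n),\sin(2\pi i/n)) : 1\le i\le n\}$. For indices $i,j\in\{1,\dots,n\}$ let $d(i,j)=\min(|i-j|,\,n-|i-j|)$ be the cyclic index distance. The neighbor set $\mathcal N_k$ is the set of ordered pairs $(i,j)$ with $1\le d(i,j)\le k/2$ (so each point has exactly its $k$ nearest neighbors and $|\mathcal N_k|=nk$); this corresponds to t-SNE input affinities $p_{ij}=1/(2nk)$ for neighbor pairs and $p_{ij}=0$ otherwise. For points $y_1,\dots,y_n\in\mathbb{R}^2$, the embedding affinities are $q_{ij}=\dfrac{(1+\|y_i-y_j\|^2)^{-1}}{\sum_{a\neq b}(1+\|y_a-y_b\|^2)^{-1}}$. A map $\phi:X\to\mathbb{R}^2$ is bilipschitz with scaling factor $S>0$ and distortion factor $L\ge1$ if $S\le \|\phi(x)-\phi(x')\|/\|x-x'\|\le SL$ for all distinct $x,x'\in X$. *)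

theory Defs
  imports "HOL-Analysis.Analysis"
begin

text \<open>Points of R^2 are modelled as real \<times> real (whose norm is the Euclidean norm).
  A configuration of n embedded points is a function y :: nat \<Rightarrow> real \<times> real,
  of which only the values on {1..n} matter.\<close>

definition circ_pt :: "nat \<Rightarrow> nat \<Rightarrow> real \<times> real" where
  "circ_pt n i = (cos (2 * pi * real i / real n), sin (2 * pi * real i / real n))"

definition cyc_dist :: "nat \<Rightarrow> nat \<Rightarrow> nat \<Rightarrow> nat" where
  "cyc_dist n i j = (let a = (if j \<le> i then i - j else j - i) in min a (n - a))"

definition nbr_set :: "nat \<Rightarrow> nat \<Rightarrow> (nat \<times> nat) set" where
  "nbr_set n k = {(i, j). i \<in> {1..n} \<and> j \<in> {1..n} \<and> 1 \<le> cyc_dist n i j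
                     \<and> real (cyc_dist n i j) \<le> real k / 2}"

definition q_aff :: "nat \<Rightarrow> (nat \<Rightarrow> real \<times> real) \<Rightarrow> nat \<Rightarrow> nat \<Rightarrow> real" where
  "q_aff n y i j = inverse (1 + (norm (y i - y j))\<^sup>2) /
     (\<Sum>a\<in>{1..n}. \<Sum>b\<in>{1..n} - {a}. inverse (1 + (norm (y a - y b))\<^sup>2))"

definition tsne_obj :: "nat \<Rightarrow> nat \<Rightarrow> (nat \<Rightarrow> real \<times> real) \<Rightarrow> real" where
  "tsne_obj n k y = (\<Sum>(i, j)\<in>nbr_set n k. ln (q_aff n y i j))"

definition tsne_maximizer :: "nat \<Rightarrow> nat \<Rightarrow> (nat \<Rightarrow> real \<times> real) \<Rightarrow> bool" where
  "tsne_maximizer n k y \<longleftrightarrow> (\<forall>z. tsne_obj n k z \<le> tsne_obj n k y)"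

definition bilipschitz :: "nat \<Rightarrow> (nat \<Rightarrow> real \<times> real) \<Rightarrow> real \<Rightarrow> real \<Rightarrow> bool" where
  "bilipschitz n y S L \<longleftrightarrow> S > 0 \<and> L \<ge> 1 \<and>
     (\<forall>i\<in>{1..n}. \<forall>j\<in>{1..n}. i \<noteq> j \<longrightarrow>
        S \<le> dist (y i) (y j) / dist (circ_pt n i) (circ_pt n j) \<and>
        dist (y i) (y j) / dist (circ_pt n i) (circ_pt n j) \<le> S * L)"

definition min_distortion :: "nat \<Rightarrow> (nat \<Rightarrow> real \<times> real) \<Rightarrow> real \<Rightarrow> real" where
  "min_distortion n y S = Inf {L. bilipschitz n y S L}"

end

theory Submission
  imports Defs
begin


lemma cos_lower: "cos (x::real) \<ge> 1 - x\<^sup>2 / 2"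
proof -
  have "cos x = cos (2 * (x/2))" by simp
  also have "\<dots> = 1 - 2 * (sin (x/2))\<^sup>2" by (rule cos_double_sin)
  finally have e: "cos x = 1 - 2 * (sin (x/2))\<^sup>2" .
  have "\<bar>sin (x/2)\<bar> \<le> \<bar>x/2\<bar>" by (rule abs_sin_x_le_abs_x)
  then have "(sin (x/2))\<^sup>2 \<le> (x/2)\<^sup>2"
    by (metis abs_ge_zero power2_abs power_mono)
  then show ?thesis using e by (simp add: power_divide)
qed

lemma sin_cubic_lower:
  assumes "0 \<le> (x::real)"
  shows "sin x \<ge> x - x^3/6"
proof (cases "x = 0")
  case True then show ?thesis by simp
next
  case False
  then have xp: "0 < x" using assms by simp
  define g where "g = (\<lambda>t::real. sin t - t + t^3/6)"
  have d: "\<forall>t. DERIV g t :> (cos t - 1 + t\<^sup>2/2)"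
    unfolding g_def by (intro allI derivative_eq_intros) (auto simp: power2_eq_square)
  obtain z where z: "0 < z" "z < x" "g x - g 0 = (x - 0) * (cos z - 1 + z\<^sup>2/2)"
    using MVT2[OF xp, of g "\<lambda>t. cos t - 1 + t\<^sup>2/2"] d by blast
  have "cos z - 1 + z\<^sup>2/2 \<ge> 0" using cos_lower[of z] by simp
  then have "g x - g 0 \<ge> 0" using z xp by simp
  then show ?thesis unfolding g_def by simp
qed

lemma sin_half_lower:
  assumes "0 \<le> (x::real)" "x \<le> pi/2"
  shows "sin x \<ge> x/2"
proof -
  have "pi \<le> 16/5" using pi_approx by simp
  then have "x \<le> 8/5" using assms by linarith
  then have "x * x \<le> (8/5) * (8/5)" using assms by (intro mult_mono) auto
  then have "x\<^sup>2 \<le> 3" by (simp add: power2_eq_square)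
  then have "x * x\<^sup>2 \<le> x * 3" using assms by (intro mult_left_mono) auto
  then have "x^3/6 \<le> x/2" by (simp add: power3_eq_cube power2_eq_square)
  then show ?thesis using sin_cubic_lower[OF assms(1)] by simp
qed

lemma dist_circle:
  "dist (cos (a::real), sin a) (cos b, sin b) = 2 * \<bar>sin ((a - b)/2)\<bar>"
proof -
  have "(cos a - cos b)\<^sup>2 + (sin a - sin b)\<^sup>2 = 2 - 2 * cos (a - b)"
    by (simp add: power2_eq_square cos_diff algebra_simps)
  also have "cos (a - b) = cos (2 * ((a-b)/2))" by (metis field_sum_of_halves mult_2)
  also have "\<dots> = 1 - 2 * (sin ((a-b)/2))\<^sup>2" by (rule cos_double_sin)
  finally have "(cos a - cos b)\<^sup>2 + (sin a - sin b)\<^sup>2 = (2 * \<bar>sin ((a - b)/2)\<bar>)\<^sup>2"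
    by (simp add: power2_eq_square)
  then have eq: "(cos a - cos b)\<^sup>2 + (sin a - sin b)\<^sup>2 = (2 * \<bar>sin ((a - b)/2)\<bar>)\<^sup>2" .
  have "dist (cos a, sin a) (cos b, sin b) = sqrt ((cos a - cos b)\<^sup>2 + (sin a - sin b)\<^sup>2)"
    by (simp add: dist_Pair_Pair dist_real_def)
  also have "\<dots> = sqrt ((2 * \<bar>sin ((a - b)/2)\<bar>)\<^sup>2)" by (simp only: eq)
  also have "\<dots> = 2 * \<bar>sin ((a - b)/2)\<bar>" by (subst real_sqrt_abs) simp
  finally show ?thesis .
qed


lemma circ_dist:
  "dist (circ_pt n i) (circ_pt n j) = 2 * \<bar>sin (pi * (real i - real j) / real n)\<bar>"
proof -
  have e: "(2 * pi * real i / real n - 2 * pi * real j / real n) / 2 = pi * (real i - real j) / real n"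
    by (cases "n = 0") (simp_all add: field_simps)
  show ?thesis unfolding circ_pt_def dist_circle e by (rule refl)
qed

lemma sin_absdiff:
  "\<bar>sin (pi * (real i - real j) / real n)\<bar> = \<bar>sin (pi * real (if j \<le> i then i - j else j - i) / real n)\<bar>"
proof (cases "j \<le> i")
  case True then show ?thesis by (simp add: of_nat_diff)
next
  case False
  then have "real (j - i) = - (real i - real j)" by (simp add: of_nat_diff)
  then have "pi * real (j - i) / real n = - (pi * (real i - real j) / real n)"
    by (cases "n = 0") (simp_all add: field_simps)
  then have "sin (pi * real (j - i) / real n) = - sin (pi * (real i - real j) / real n)"
    by (simp only: sin_minus)
  then show ?thesis using False by simp
qed

lemma sin_flip:
  assumes "d \<le> n" "n > 0"
  shows "sin (pi * real (n - d) / real n) = sin (pi * real d / real n)"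
proof -
  have "pi * real (n - d) / real n = pi - pi * real d / real n"
    using assms by (simp add: of_nat_diff field_simps)
  then show ?thesis by (simp add: sin_pi_minus)
qed

lemma chord_upper:
  assumes "i \<le> n" "j \<le> n" "n > 0"
  shows "dist (circ_pt n i) (circ_pt n j) \<le> 2 * pi * real (cyc_dist n i j) / real n"
proof -
  define d where "d = (if j \<le> i then i - j else j - i)"
  have dn: "d \<le> n" using assms unfolding d_def by auto
  have c: "dist (circ_pt n i) (circ_pt n j) = 2 * \<bar>sin (pi * real d / real n)\<bar>"
    using circ_dist sin_absdiff d_def by simp
  have u1: "\<bar>sin (pi * real d / real n)\<bar> \<le> pi * real d / real n"
    using abs_sin_x_le_abs_x[of "pi * real d / real n"] by simp
  have u2: "\<bar>sin (pi * real d / real n)\<bar> \<le> pi * real (n - d) / real n"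
    using abs_sin_x_le_abs_x[of "pi * real (n - d) / real n"] sin_flip[OF dn assms(3)] by simp
  have cd: "cyc_dist n i j = min d (n - d)" unfolding cyc_dist_def d_def Let_def by simp
  show ?thesis
  proof (cases "d \<le> n - d")
    case True
    then show ?thesis using c u1 cd by (simp add: min_def)
  next
    case False
    then show ?thesis using c u2 cd by (simp add: min_def)
  qed
qed

lemma chord_lower:
  assumes "i \<in> {1..n}" "j \<in> {1..n}" "i \<noteq> j"
  defines "d \<equiv> (if j \<le> i then i - j else j - i)"
  shows "3 * real (min d (n - d)) / real n \<le> dist (circ_pt n i) (circ_pt n j)"
    and "1 \<le> min d (n - d)" "d \<le> n"
proof -
  have n0: "n > 0" using assms by auto
  have d1: "1 \<le> d" "d < n" using assms unfolding d_def by auto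
  show "d \<le> n" using d1 by simp
  define t where "t = min d (n - d)"
  show "1 \<le> min d (n - d)" using d1 by simp
  have t1: "1 \<le> t" "2 * t \<le> n" unfolding t_def using d1 by auto
  have st: "sin (pi * real t / real n) = sin (pi * real d / real n)"
    unfolding t_def using sin_flip[of d n] d1 n0 by (simp add: min_def)
  have c: "dist (circ_pt n i) (circ_pt n j) = 2 * \<bar>sin (pi * real d / real n)\<bar>"
    using circ_dist sin_absdiff d_def by simp
  have x0: "0 \<le> pi * real t / real n" by simp
  have x1: "pi * real t / real n \<le> pi / 2"
  proof -
    have "real (2 * t) \<le> real n" using t1 by linarith
    then have "real t / real n \<le> 1/2" using n0 by (simp add: field_simps)
    then show ?thesis using pi_gt_zero
      by (metis mult.commute mult_left_mono order_less_imp_le times_divide_eq_left times_divide_eq_right mult_1_right)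
  qed
  have half: "pi * real t / real n / 2 \<le> sin (pi * real t / real n)" using sin_half_lower[OF x0 x1] .
  have pge: "3 * real t / real n \<le> pi * real t / real n"
    using pi_gt3 n0 by (simp add: divide_right_mono mult_right_mono)
  have sa: "sin (pi * real t / real n) \<le> \<bar>sin (pi * real d / real n)\<bar>" using st by simp
  have gen: "\<And>D S A P Q. D = 2*A \<Longrightarrow> S \<le> A \<Longrightarrow> P/2 \<le> S \<Longrightarrow> Q \<le> P \<Longrightarrow> Q \<le> (D::real)"
    by linarith
  show "3 * real (min d (n - d)) / real n \<le> dist (circ_pt n i) (circ_pt n j)"
    unfolding t_def[symmetric] using gen[OF c sa half pge] .
qed



lemma telescope: "(\<Sum>r\<in>{1..n}. 1 / (real r * (real r + 1))) = 1 - 1 / (real n + 1)"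
proof (induction n)
  case 0 then show ?case by simp
next
  case (Suc n)
  have "(\<Sum>r\<in>{1..Suc n}. 1 / (real r * (real r + 1))) =
        (\<Sum>r\<in>{1..n}. 1 / (real r * (real r + 1))) + 1 / (real (Suc n) * (real (Suc n) + 1))"
    by simp
  also have "\<dots> = 1 - 1 / (real n + 1) + 1 / ((real n + 1) * (real n + 2))"
    using Suc by (simp add: add.commute)
  also have "\<dots> = 1 - 1 / (real n + 2)"
  proof -
    have aux: "1/a - 1/(a*b) = 1/b" if "a > 0" "b > 0" "b = a + 1" for a b :: real
    proof -
      have "a * a > 0" using that by simp
      then have "a + a * a \<noteq> 0" using that by linarith
      then show ?thesis using that by (simp add: field_simps)
    qed
    have "1 / (real n + 1) - 1 / ((real n + 1) * (real n + 2)) = 1 / (real n + 2)"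
      by (rule aux) auto
    then show ?thesis by linarith
  qed
  also have "\<dots> = 1 - 1 / (real (Suc n) + 1)" by simp
  finally show ?case .
qed

lemma G_le_1: "(\<Sum>r\<in>{1..n}. inverse (1 + 9 * (real r)\<^sup>2)) \<le> 1"
proof -
  have "(\<Sum>r\<in>{1..n}. inverse (1 + 9 * (real r)\<^sup>2)) \<le> (\<Sum>r\<in>{1..n}. 1 / (real r * (real r + 1)))"
  proof (rule sum_mono)
    fix r assume "r \<in> {1..n}"
    then have r1: "real r \<ge> 1" by simp
    have "real r * 1 \<le> real r * real r" using r1 by (intro mult_left_mono) auto
    then have "real r * (real r + 1) \<le> 1 + 9 * (real r)\<^sup>2" by (simp add: power2_eq_square algebra_simps)
    moreover have "0 < real r * (real r + 1)" using r1 by simp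
    ultimately show "inverse (1 + 9 * (real r)\<^sup>2) \<le> 1 / (real r * (real r + 1))"
      by (simp add: inverse_eq_divide frac_le)
  qed
  also have "\<dots> \<le> 1" unfolding telescope by simp
  finally show ?thesis .
qed

lemma reindex_bound:
  fixes g :: "nat \<Rightarrow> real"
  assumes "inj_on h A" "h ` A \<subseteq> {1..n}" "\<And>r. g r \<ge> 0"
  shows "(\<Sum>b\<in>A. g (h b)) \<le> (\<Sum>r\<in>{1..n}. g r)"
proof -
  have fA: "finite A" using assms(1,2) finite_subset[OF assms(2)] by (metis finite_atLeastAtMost finite_imageD)
  have "(\<Sum>b\<in>A. g (h b)) = (\<Sum>r\<in>h ` A. g r)" by (simp add: sum.reindex[OF assms(1)] comp_def)
  also have "\<dots> \<le> (\<Sum>r\<in>{1..n}. g r)" by (rule sum_mono2) (use assms in auto)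
  finally show ?thesis .
qed


definition dd :: "nat \<Rightarrow> nat \<Rightarrow> nat" where "dd a b = (if b \<le> a then a - b else b - a)"

lemma split_sum:
  fixes g :: "nat \<Rightarrow> real"
  assumes "a \<in> {1..n}" "\<And>r. g r \<ge> 0"
  shows "(\<Sum>b\<in>{1..n}-{a}. g (dd a b)) \<le> 2 * (\<Sum>r\<in>{1..n}. g r)"
    and "(\<Sum>b\<in>{1..n}-{a}. g (n - dd a b)) \<le> 2 * (\<Sum>r\<in>{1..n}. g r)"
proof -
  define A1 where "A1 = {b\<in>{1..n}. b < a}"
  define A2 where "A2 = {b\<in>{1..n}. a < b}"
  have U: "{1..n}-{a} = A1 \<union> A2" "A1 \<inter> A2 = {}" "finite A1" "finite A2"
    unfolding A1_def A2_def by auto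
  have s1: "(\<Sum>b\<in>A1. g (dd a b)) \<le> (\<Sum>r\<in>{1..n}. g r)"
  proof -
    have "(\<Sum>b\<in>A1. g (dd a b)) = (\<Sum>b\<in>A1. g (a - b))"
      by (rule sum.cong) (auto simp: A1_def dd_def)
    also have "\<dots> \<le> (\<Sum>r\<in>{1..n}. g r)"
      by (rule reindex_bound) (use assms in \<open>auto simp: A1_def inj_on_def\<close>)
    finally show ?thesis .
  qed
  have s2: "(\<Sum>b\<in>A2. g (dd a b)) \<le> (\<Sum>r\<in>{1..n}. g r)"
  proof -
    have "(\<Sum>b\<in>A2. g (dd a b)) = (\<Sum>b\<in>A2. g (b - a))"
      by (rule sum.cong) (auto simp: A2_def dd_def)
    also have "\<dots> \<le> (\<Sum>r\<in>{1..n}. g r)"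
      by (rule reindex_bound) (use assms in \<open>auto simp: A2_def inj_on_def\<close>)
    finally show ?thesis .
  qed
  have s3: "(\<Sum>b\<in>A1. g (n - dd a b)) \<le> (\<Sum>r\<in>{1..n}. g r)"
  proof -
    have "(\<Sum>b\<in>A1. g (n - dd a b)) = (\<Sum>b\<in>A1. g (n - (a - b)))"
      by (rule sum.cong) (auto simp: A1_def dd_def)
    also have "\<dots> \<le> (\<Sum>r\<in>{1..n}. g r)"
      by (rule reindex_bound) (use assms in \<open>auto simp: A1_def inj_on_def\<close>)
    finally show ?thesis .
  qed
  have s4: "(\<Sum>b\<in>A2. g (n - dd a b)) \<le> (\<Sum>r\<in>{1..n}. g r)"
  proof -
    have "(\<Sum>b\<in>A2. g (n - dd a b)) = (\<Sum>b\<in>A2. g (n - (b - a)))"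
      by (rule sum.cong) (auto simp: A2_def dd_def)
    also have "\<dots> \<le> (\<Sum>r\<in>{1..n}. g r)"
      by (rule reindex_bound) (use assms in \<open>auto simp: A2_def inj_on_def\<close>)
    finally show ?thesis .
  qed
  show "(\<Sum>b\<in>{1..n}-{a}. g (dd a b)) \<le> 2 * (\<Sum>r\<in>{1..n}. g r)"
    using s1 s2 U by (simp add: sum.union_disjoint)
  show "(\<Sum>b\<in>{1..n}-{a}. g (n - dd a b)) \<le> 2 * (\<Sum>r\<in>{1..n}. g r)"
    using s3 s4 U by (simp add: sum.union_disjoint)
qed



definition Zs :: "nat \<Rightarrow> (nat \<Rightarrow> real \<times> real) \<Rightarrow> real" where
  "Zs n y = (\<Sum>a\<in>{1..n}. \<Sum>b\<in>{1..n} - {a}. inverse (1 + (norm (y a - y b))\<^sup>2))"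

lemma q_eq: "q_aff n y i j = inverse (1 + (norm (y i - y j))\<^sup>2) / Zs n y"
  by (simp add: q_aff_def Zs_def)

lemma Zs_pos:
  assumes "n \<ge> 2" shows "Zs n y > 0"
  unfolding Zs_def
proof (rule sum_pos)
  show "finite {1..n}" "{1..n} \<noteq> {}" using assms by auto
  fix a assume a: "a \<in> {1..n}"
  have "(if a = 1 then 2 else 1) \<in> {1..n} - {a}" using assms a by auto
  then have ne: "{1..n} - {a} \<noteq> {}" by blast
  show "0 < (\<Sum>b\<in>{1..n} - {a}. inverse (1 + (norm (y a - y b))\<^sup>2))"
    by (rule sum_pos) (use ne in \<open>auto intro: add_pos_nonneg\<close>)
qed

lemma finite_nbr: "finite (nbr_set n k)"
  by (rule finite_subset[of _ "{1..n} \<times> {1..n}"]) (auto simp: nbr_set_def)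

lemma obj_upper:
  assumes "n \<ge> 2"
  shows "tsne_obj n k y \<le> real (card (nbr_set n k)) * (- ln (Zs n y))"
  unfolding tsne_obj_def
proof (rule sum_bounded_above)
  fix p assume "p \<in> nbr_set n k"
  obtain i j where p: "p = (i, j)" by (cases p)
  have Z: "Zs n y > 0" using Zs_pos[OF assms] .
  define w where "w = inverse (1 + (norm (y i - y j))\<^sup>2)"
  have w0: "w > 0" unfolding w_def by (simp add: add_pos_nonneg)
  have w1: "w \<le> 1" unfolding w_def by (simp add: inverse_le_1_iff)
  have "ln (q_aff n y i j) = ln w - ln (Zs n y)"
    unfolding q_eq w_def[symmetric] using w0 Z by (simp add: ln_div)
  moreover have "ln w \<le> 0" using w0 w1 by simp
  ultimately show "(case p of (i, j) \<Rightarrow> ln (q_aff n y i j)) \<le> - ln (Zs n y)"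
    using p by simp
qed

lemma obj_lower:
  assumes "n \<ge> 2" "c > 0"
    and "\<And>i j. (i, j) \<in> nbr_set n k \<Longrightarrow> c \<le> inverse (1 + (norm (z i - z j))\<^sup>2)"
  shows "real (card (nbr_set n k)) * (ln c - ln (Zs n z)) \<le> tsne_obj n k z"
  unfolding tsne_obj_def
proof (rule sum_bounded_below)
  fix p assume pN: "p \<in> nbr_set n k"
  obtain i j where p: "p = (i, j)" by (cases p)
  have Z: "Zs n z > 0" using Zs_pos[OF assms(1)] .
  define w where "w = inverse (1 + (norm (z i - z j))\<^sup>2)"
  have w0: "w > 0" unfolding w_def by (simp add: add_pos_nonneg)
  have cw: "c \<le> w" unfolding w_def using assms(3) pN p by blast
  have "ln (q_aff n z i j) = ln w - ln (Zs n z)"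
    unfolding q_eq w_def[symmetric] using w0 Z by (simp add: ln_div)
  moreover have "ln c \<le> ln w" using cw assms(2) by simp
  ultimately show "ln c - ln (Zs n z) \<le> (case p of (i, j) \<Rightarrow> ln (q_aff n z i j))"
    using p by simp
qed


lemma norm_scaled_circ:
  "norm (real n *\<^sub>R circ_pt n a - real n *\<^sub>R circ_pt n b) = real n * dist (circ_pt n a) (circ_pt n b)"
  by (simp add: dist_norm scaleR_diff_right[symmetric])

lemma Zs_circle:
  assumes "n \<ge> 1"
  shows "Zs n (\<lambda>i. real n *\<^sub>R circ_pt n i) \<le> 4 * real n"
proof -
  define g :: "nat \<Rightarrow> real" where "g r = inverse (1 + 9 * (real r)\<^sup>2)" for r
  have g0: "\<And>r. g r \<ge> 0" unfolding g_def by (simp add: add_nonneg_nonneg)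
  have G: "(\<Sum>r\<in>{1..n}. g r) \<le> 1" unfolding g_def by (rule G_le_1)
  have inner: "(\<Sum>b\<in>{1..n} - {a}. inverse (1 + (norm (real n *\<^sub>R circ_pt n a - real n *\<^sub>R circ_pt n b))\<^sup>2)) \<le> 4"
    if a: "a \<in> {1..n}" for a
  proof -
    have pt: "inverse (1 + (norm (real n *\<^sub>R circ_pt n a - real n *\<^sub>R circ_pt n b))\<^sup>2)
              \<le> g (dd a b) + g (n - dd a b)" if b: "b \<in> {1..n} - {a}" for b
    proof -
      have bb: "b \<in> {1..n}" "a \<noteq> b" using b by auto
      define t where "t = min (dd a b) (n - dd a b)"
      have cl: "3 * real t / real n \<le> dist (circ_pt n a) (circ_pt n b)"
        using chord_lower(1)[OF a bb(1) bb(2)] unfolding t_def dd_def by simp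
      have np: "real n > 0" using assms by simp
      have "3 * real t \<le> real n * dist (circ_pt n a) (circ_pt n b)"
        using cl np by (simp add: field_simps)
      then have "(3 * real t)\<^sup>2 \<le> (real n * dist (circ_pt n a) (circ_pt n b))\<^sup>2"
        by (intro power_mono) auto
      then have "1 + 9 * (real t)\<^sup>2 \<le> 1 + (norm (real n *\<^sub>R circ_pt n a - real n *\<^sub>R circ_pt n b))\<^sup>2"
        unfolding norm_scaled_circ by (simp add: power_mult_distrib)
      then have "inverse (1 + (norm (real n *\<^sub>R circ_pt n a - real n *\<^sub>R circ_pt n b))\<^sup>2) \<le> g t"
        unfolding g_def by (intro le_imp_inverse_le) (auto intro: add_pos_nonneg)
      also have "g t \<le> g (dd a b) + g (n - dd a b)"
        unfolding t_def using g0 by (cases "dd a b \<le> n - dd a b") (auto simp: min_def add_increasing add_increasing2)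
      finally show ?thesis .
    qed
    have "(\<Sum>b\<in>{1..n} - {a}. inverse (1 + (norm (real n *\<^sub>R circ_pt n a - real n *\<^sub>R circ_pt n b))\<^sup>2))
        \<le> (\<Sum>b\<in>{1..n} - {a}. g (dd a b) + g (n - dd a b))"
      by (rule sum_mono) (rule pt)
    also have "\<dots> = (\<Sum>b\<in>{1..n} - {a}. g (dd a b)) + (\<Sum>b\<in>{1..n} - {a}. g (n - dd a b))"
      by (rule sum.distrib)
    also have "\<dots> \<le> 2 * (\<Sum>r\<in>{1..n}. g r) + 2 * (\<Sum>r\<in>{1..n}. g r)"
      using split_sum[OF a g0] by (intro add_mono) auto
    also have "\<dots> \<le> 4" using G by simp
    finally show ?thesis .
  qed
  have "Zs n (\<lambda>i. real n *\<^sub>R circ_pt n i) \<le> real (card {1..n}) * 4"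
    unfolding Zs_def by (rule sum_bounded_above) (rule inner)
  then show ?thesis by simp
qed

lemma Zs_lower:
  assumes bl: "bilipschitz n y S L" and M1: "M \<ge> 1" and M2: "2 * M \<le> n" and MS: "real M * S \<le> real n"
  shows "real (n - M) * real M * inverse (1 + (2 * pi * L)\<^sup>2) \<le> Zs n y"
proof -
  define c where "c = inverse (1 + (2 * pi * L)\<^sup>2)"
  have S0: "S > 0" and L1: "L \<ge> 1" using bl unfolding bilipschitz_def by auto
  have np: "real n > 0" using M1 M2 by simp
  define F where "F a = (\<Sum>b\<in>{1..n} - {a}. inverse (1 + (norm (y a - y b))\<^sup>2))" for a
  have F0: "F a \<ge> 0" for a unfolding F_def by (intro sum_nonneg) (simp add: add_nonneg_nonneg)
  have Fa: "real M * c \<le> F a" if a: "a \<in> {1..n - M}" for a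
  proof -
    have wb: "c \<le> inverse (1 + (norm (y a - y b))\<^sup>2)" if b: "b \<in> {a+1..a+M}" for b
    proof -
      have ab: "a \<in> {1..n}" "b \<in> {1..n}" "a \<noteq> b" using a b M2 by auto
      define ch where "ch = dist (circ_pt n a) (circ_pt n b)"
      have chpos: "ch > 0"
      proof -
        have "3 * real (min (if b \<le> a then a - b else b - a) (n - (if b \<le> a then a - b else b - a))) / real n \<le> ch"
          using chord_lower(1)[OF ab] unfolding ch_def .
        moreover have "1 \<le> min (if b \<le> a then a - b else b - a) (n - (if b \<le> a then a - b else b - a))"
          using chord_lower(2)[OF ab] .
        ultimately show ?thesis using np
          by (smt (z3) divide_pos_pos of_nat_0_less_iff of_nat_le_0_iff not_one_le_zero)
      qed
      have "dist (y a) (y b) / ch \<le> S * L" using bl ab unfolding bilipschitz_def ch_def by blast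
      then have d1: "dist (y a) (y b) \<le> S * L * ch" using chpos by (simp add: divide_le_eq)
      have "ch = 2 * \<bar>sin (pi * (real a - real b) / real n)\<bar>" unfolding ch_def by (rule circ_dist)
      also have "\<dots> \<le> 2 * \<bar>pi * (real a - real b) / real n\<bar>" using abs_sin_x_le_abs_x[of "pi * (real a - real b) / real n"] by linarith
      also have "\<dots> = 2 * pi * (real b - real a) / real n" using b np by (simp add: abs_if field_simps)
      also have "\<dots> \<le> 2 * pi * real M / real n" using b np by (intro divide_right_mono) auto
      finally have ch2: "ch \<le> 2 * pi * real M / real n" .
      have "dist (y a) (y b) \<le> S * L * (2 * pi * real M / real n)"
        using d1 ch2 S0 L1 by (smt (verit) mult_left_mono mult_pos_pos)
      also have "\<dots> = 2 * pi * L * (real M * S) / real n" by (simp add: field_simps)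
      also have "\<dots> \<le> 2 * pi * L * real n / real n" using MS L1 np by (intro divide_right_mono mult_left_mono) auto
      also have "\<dots> = 2 * pi * L" using np by simp
      finally have "norm (y a - y b) \<le> 2 * pi * L" by (simp add: dist_norm)
      then have "(norm (y a - y b))\<^sup>2 \<le> (2 * pi * L)\<^sup>2" by (intro power_mono) auto
      then show ?thesis unfolding c_def by (intro le_imp_inverse_le) (auto intro: add_pos_nonneg)
    qed
    have "real M * c = real (card {a+1..a+M}) * c" by simp
    also have "\<dots> \<le> (\<Sum>b\<in>{a+1..a+M}. inverse (1 + (norm (y a - y b))\<^sup>2))"
      by (rule sum_bounded_below) (rule wb)
    also have "\<dots> \<le> F a" unfolding F_def
      by (rule sum_mono2) (use a M2 in \<open>auto simp: add_nonneg_nonneg\<close>)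
    finally show ?thesis .
  qed
  have "real (n - M) * real M * c = real (card {1..n - M}) * (real M * c)" by simp
  also have "\<dots> \<le> (\<Sum>a\<in>{1..n - M}. F a)" by (rule sum_bounded_below) (rule Fa)
  also have "\<dots> \<le> (\<Sum>a\<in>{1..n}. F a)" by (rule sum_mono2) (use F0 in auto)
  also have "\<dots> = Zs n y" unfolding Zs_def F_def ..
  finally show ?thesis unfolding c_def .
qed


lemma core:
  assumes k0: "k > 0" and ke: "even k" and M1: "M \<ge> 1" and M2: "2 * M \<le> n"
    and MS: "real M * S \<le> real n" and bl: "bilipschitz n y S L" and LB: "L \<le> B"
    and MK: "real M > 8 * (1 + (pi * real k)\<^sup>2) * (1 + (2 * pi * B)\<^sup>2)"
  shows "\<not> tsne_maximizer n k y"
proof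
  assume mx: "tsne_maximizer n k y"
  have n2: "n \<ge> 2" using M1 M2 by simp
  have np: "real n > 0" using n2 by simp
  have L1: "L \<ge> 1" using bl unfolding bilipschitz_def by auto
  define z where "z = (\<lambda>i. real n *\<^sub>R circ_pt n i)"
  define N where "N = nbr_set n k"
  define c0 where "c0 = inverse (1 + (pi * real k)\<^sup>2)"
  have c0p: "c0 > 0" unfolding c0_def by (simp add: add_pos_nonneg)
  have k2: "k \<ge> 2" using k0 ke by presburger
  have "(1, 2) \<in> N" using n2 k2 unfolding N_def nbr_set_def cyc_dist_def Let_def by auto
  then have cardN: "card N > 0" using finite_nbr[of n k] unfolding N_def by (auto simp: card_gt_0_iff)
  have nb: "c0 \<le> inverse (1 + (norm (z i - z j))\<^sup>2)" if ij: "(i, j) \<in> nbr_set n k" for i j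
  proof -
    have ij': "i \<le> n" "j \<le> n" "real (cyc_dist n i j) \<le> real k / 2"
      using ij unfolding nbr_set_def by auto
    have "dist (circ_pt n i) (circ_pt n j) \<le> 2 * pi * real (cyc_dist n i j) / real n"
      using chord_upper[OF ij'(1,2)] np by simp
    then have "real n * dist (circ_pt n i) (circ_pt n j) \<le> 2 * pi * real (cyc_dist n i j)"
      using np by (simp add: field_simps)
    also have "\<dots> \<le> 2 * pi * (real k / 2)" using ij'(3) by (intro mult_left_mono) auto
    also have "\<dots> = pi * real k" by simp
    finally have "norm (z i - z j) \<le> pi * real k" unfolding z_def norm_scaled_circ .
    then have "(norm (z i - z j))\<^sup>2 \<le> (pi * real k)\<^sup>2" by (intro power_mono) auto
    then show ?thesis unfolding c0_def by (intro le_imp_inverse_le) (auto intro: add_pos_nonneg)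
  qed
  have lowz: "real (card N) * (ln c0 - ln (Zs n z)) \<le> tsne_obj n k z"
    unfolding N_def by (rule obj_lower[OF n2 c0p nb])
  have upy: "tsne_obj n k y \<le> real (card N) * (- ln (Zs n y))"
    unfolding N_def by (rule obj_upper[OF n2])
  have Zz: "Zs n z \<le> 4 * real n" "Zs n z > 0" unfolding z_def using Zs_circle Zs_pos n2 by auto
  have Zy: "real (n - M) * real M * inverse (1 + (2 * pi * L)\<^sup>2) \<le> Zs n y"
    by (rule Zs_lower[OF bl M1 M2 MS])
  define A where "A = 1 + (pi * real k)\<^sup>2"
  define D where "D = 1 + (2 * pi * B)\<^sup>2"
  have A1: "A \<ge> 1" unfolding A_def by simp
  have D1: "D \<ge> 1" unfolding D_def by simp
  have LD: "1 + (2 * pi * L)\<^sup>2 \<le> D" unfolding D_def using LB L1 by (intro add_left_mono power_mono) auto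
  have nM: "real (n - M) \<ge> real n / 2" using M2 by (simp add: of_nat_diff)
  have "real (n - M) * real M * inverse D \<le> real (n - M) * real M * inverse (1 + (2 * pi * L)\<^sup>2)"
    using LD by (intro mult_left_mono le_imp_inverse_le) (auto intro: add_pos_nonneg)
  moreover have "real n / 2 * real M * inverse D \<le> real (n - M) * real M * inverse D"
    using nM D1 by (intro mult_right_mono) auto
  moreover have "real n / 2 * (8 * A * D) * inverse D < real n / 2 * real M * inverse D"
    using MK np D1 unfolding A_def[symmetric] D_def[symmetric] by (intro mult_strict_right_mono mult_strict_left_mono) auto
  moreover have "real n / 2 * (8 * A * D) * inverse D = 4 * real n * A" using D1 by (simp add: field_simps)
  ultimately have "4 * real n * A < Zs n y" using Zy by linarith
  moreover have "Zs n z * A \<le> 4 * real n * A" using Zz A1 by (intro mult_right_mono) auto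
  ultimately have ZZ: "Zs n z * A < Zs n y" by linarith
  have "ln (Zs n z * A) < ln (Zs n y)" using ZZ Zz(2) A1 Zs_pos[OF n2, of y] by (intro ln_less_cancel_iff[THEN iffD2]) auto
  then have "ln (Zs n z) + ln A < ln (Zs n y)" using Zz(2) A1 by (simp add: ln_mult)
  moreover have "ln c0 = - ln A" unfolding c0_def A_def using ln_inverse by (simp add: add_pos_nonneg)
  ultimately have "- ln (Zs n y) < ln c0 - ln (Zs n z)" by linarith
  then have "real (card N) * (- ln (Zs n y)) < real (card N) * (ln c0 - ln (Zs n z))"
    using cardN by (intro mult_strict_left_mono) auto
  then have "tsne_obj n k y < tsne_obj n k z" using lowz upy by linarith
  then show False using mx unfolding tsne_maximizer_def by (meson not_le)
qed


lemma eventually_powr_bound: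
  fixes \<tau> :: real and M :: nat
  assumes "0 < \<tau>" "\<tau> < 1"
  shows "\<forall>\<^sub>F n in sequentially. real M * real n powr \<tau> \<le> real n"
proof -
  define N0 :: nat where "N0 = nat \<lceil>real M powr (1 / (1 - \<tau>))\<rceil> + 1"
  show ?thesis unfolding eventually_sequentially
  proof (intro exI allI impI)
    fix n assume n: "N0 \<le> n"
    have np: "real n > 0" using n unfolding N0_def by simp
    have le: "real M powr (1 / (1 - \<tau>)) \<le> real n"
      using n unfolding N0_def by linarith
    have "real M = (real M powr (1 / (1 - \<tau>))) powr (1 - \<tau>)"
      using assms by (simp add: powr_powr)
    also have "\<dots> \<le> real n powr (1 - \<tau>)" using le assms by (intro powr_mono2) auto
    finally have "real M * real n powr \<tau> \<le> real n powr (1 - \<tau>) * real n powr \<tau>"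
      by (intro mult_right_mono) auto
    also have "\<dots> = real n" using np by (simp add: powr_add[symmetric])
    finally show "real M * real n powr \<tau> \<le> real n" .
  qed
qed

theorem theorem1:
  fixes \<tau> :: real and k :: nat and y :: "nat \<Rightarrow> nat \<Rightarrow> real \<times> real"
  assumes "0 < \<tau>" and "\<tau> < 1"
    and "k > 0" and "even k"
    and "\<forall>\<^sub>F n in sequentially.
           tsne_maximizer n k (y n) \<and> (\<exists>L. bilipschitz n (y n) (real n powr \<tau>) L)"
  shows "filterlim (\<lambda>n. min_distortion n (y n) (real n powr \<tau>)) at_top sequentially"
  unfolding filterlim_at_top
proof
  fix C :: real
  define B where "B = max C 1"
  define M :: nat where "M = nat \<lceil>8 * (1 + (pi * real k)\<^sup>2) * (1 + (2 * pi * B)\<^sup>2)\<rceil> + 1"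
  have M1: "M \<ge> 1" unfolding M_def by simp
  have MK: "real M > 8 * (1 + (pi * real k)\<^sup>2) * (1 + (2 * pi * B)\<^sup>2)"
    unfolding M_def by linarith
  have ev: "\<forall>\<^sub>F n in sequentially. 2 * M \<le> n" by (rule eventually_ge_at_top)
  show "\<forall>\<^sub>F n in sequentially. C \<le> min_distortion n (y n) (real n powr \<tau>)"
    using assms(5) ev eventually_powr_bound[OF assms(1,2), of M]
  proof eventually_elim
    case (elim n)
    then have mx: "tsne_maximizer n k (y n)" and ex: "\<exists>L. bilipschitz n (y n) (real n powr \<tau>) L"
      and M2: "2 * M \<le> n" and MS: "real M * real n powr \<tau> \<le> real n" by auto
    show ?case
    proof (rule ccontr)
      assume "\<not> C \<le> min_distortion n (y n) (real n powr \<tau>)"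
      then have lt: "Inf {L. bilipschitz n (y n) (real n powr \<tau>) L} < C"
        unfolding min_distortion_def by simp
      have ne: "{L. bilipschitz n (y n) (real n powr \<tau>) L} \<noteq> {}" using ex by auto
      obtain L where bl: "bilipschitz n (y n) (real n powr \<tau>) L" and LC: "L < C"
        using cInf_lessD[OF ne lt] by auto
      have "L \<le> B" using LC unfolding B_def by simp
      from core[OF assms(3,4) M1 M2 MS bl this MK] mx show False by simp
    qed
  qed
qed

end
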